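(* Let $f:\mathbb{R}^m\to\mathbb{R}^m$, $y_0\in\mathbb{R}^m$, $T>0$, $h>0$, and let $(y_n)$ be defined by $y_{n+1}=y_n+hf(y_n)$ for $0\le n<\lfloor T/h\rfloor$. For $R>0$ let $\Omega=\{y:\|y-y_0\|<R\}$ and suppose $f$ is Lipschitz on $\Omega$ with constant $\mathcal{L}_f:=\sup_{y_1\ne y_2,\ y_1,y_2\in\Omega}\frac{\|f(y_2)-f(y_1)\|}{\|y_2-y_1\|}\in(0,\infty)$. If \[ R>\frac{1}{\mathcal{L}_f}\Big((1+\mathcal{L}_fh)^{\lfloor T/h\rfloor}-1\Big)\|f(y_0)\|, \] then $\|y_n-y_0\|\le R$ for all $n=0,1,\dots,\lfloor T/h\rfloor$.
   Context: $\|\cdot\|$ is the Euclidean norm and $\lfloor x\rfloor$ the largest integer not exceeding $x$. *)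

theory Defs
  imports "HOL-Analysis.Analysis"
begin

definition lip_quotients :: "('a::real_normed_vector \<Rightarrow> 'b::real_normed_vector) \<Rightarrow> 'a set \<Rightarrow> real set" where
  "lip_quotients f S = {norm (f y2 - f y1) / norm (y2 - y1) | y1 y2. y1 \<in> S \<and> y2 \<in> S \<and> y1 \<noteq> y2}"

definition lip_const :: "('a::real_normed_vector \<Rightarrow> 'b::real_normed_vector) \<Rightarrow> 'a set \<Rightarrow> real" where
  "lip_const f S = Sup (lip_quotients f S)"

end

theory Submission
  imports Defs
begin

theorem lemma3p8:
  fixes f :: "real ^ 'm \<Rightarrow> real ^ 'm" and y :: "nat \<Rightarrow> real ^ 'm"
    and y0 :: "real ^ 'm" and T h R :: real
  assumes "T > 0" and "h > 0"
    and "y 0 = y0"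
    and "\<And>n. n < nat \<lfloor>T / h\<rfloor> \<Longrightarrow> y (Suc n) = y n + h *\<^sub>R f (y n)"
    and "R > 0"
    and "bdd_above (lip_quotients f (ball y0 R))"
    and "lip_const f (ball y0 R) > 0"
    and "R > (1 / lip_const f (ball y0 R)) *
              ((1 + lip_const f (ball y0 R) * h) ^ nat \<lfloor>T / h\<rfloor> - 1) * norm (f y0)"
  shows "\<forall>n \<le> nat \<lfloor>T / h\<rfloor>. norm (y n - y0) \<le> R"
proof -
  define L where "L = lip_const f (ball y0 R)"
  define N where "N = nat \<lfloor>T / h\<rfloor>"
  define F where "F = norm (f y0)"
  have L0: "L > 0" using assms(7) L_def by simp
  have F0: "F \<ge> 0" using F_def by simp
  have lip: "norm (f a - f y0) \<le> L * norm (a - y0)" if "a \<in> ball y0 R" for a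
  proof (cases "a = y0")
    case True then show ?thesis by simp
  next
    case False
    have "norm (f a - f y0) / norm (a - y0) \<in> lip_quotients f (ball y0 R)"
      unfolding lip_quotients_def using that False assms(5) by force
    then have "norm (f a - f y0) / norm (a - y0) \<le> L"
      unfolding L_def lip_const_def using assms(6) by (simp add: cSup_upper)
    moreover have "norm (a - y0) > 0" using False by simp
    ultimately show ?thesis by (simp add: divide_le_eq mult.commute)
  qed
  have RB: "R > ((1 + L*h)^N - 1) / L * F" using assms(8) unfolding L_def N_def F_def by simp
  have mono: "((1 + L*h)^n - 1) / L * F \<le> ((1 + L*h)^N - 1) / L * F" if "n \<le> N" for n
  proof -
    have "(1 + L*h)^n \<le> (1 + L*h)^N"
      using that L0 assms(2) by (intro power_increasing) auto
    then show ?thesis using L0 F0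
      by (intro mult_right_mono divide_right_mono) auto
  qed
  have main: "n \<le> N \<longrightarrow> norm (y n - y0) \<le> ((1 + L*h)^n - 1) / L * F" for n
  proof (induction n)
    case 0 then show ?case using assms(3) by simp
  next
    case (Suc n)
    show ?case
    proof
      assume sn: "Suc n \<le> N"
      let ?e = "norm (y n - y0)"
      have IH: "?e \<le> ((1 + L*h)^n - 1) / L * F" using Suc sn by simp
      have "?e < R" using IH mono[of n] sn RB by linarith
      then have inb: "y n \<in> ball y0 R" by (simp add: dist_norm norm_minus_commute)
      have fb: "norm (f (y n)) \<le> F + L * ?e"
        using lip[OF inb] norm_triangle_ineq[of "f (y n) - f y0" "f y0"] F_def by simp
      have "y (Suc n) - y0 = (y n - y0) + h *\<^sub>R f (y n)"
        using assms(4)[of n] sn N_def by simp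
      then have "norm (y (Suc n) - y0) \<le> ?e + h * norm (f (y n))"
        using norm_triangle_ineq[of "y n - y0" "h *\<^sub>R f (y n)"] assms(2) by (simp add: algebra_simps)
      also have "\<dots> \<le> ?e + h * (F + L * ?e)"
        using fb assms(2) by (simp add: mult_left_mono)
      also have "\<dots> = (1 + L*h) * ?e + h * F" by (simp add: algebra_simps)
      also have "\<dots> \<le> (1 + L*h) * (((1 + L*h)^n - 1) / L * F) + h * F"
        using mult_left_mono[OF IH, of "1 + L*h"] L0 assms(2) by simp
      also have "\<dots> = ((1 + L*h)^Suc n - 1) / L * F"
        using L0 by (simp add: field_simps)
      finally show "norm (y (Suc n) - y0) \<le> ((1 + L*h)^Suc n - 1) / L * F" .
    qed
  qed
  show ?thesis
  proof (intro allI impI)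
    fix n assume "n \<le> nat \<lfloor>T / h\<rfloor>"
    then have "n \<le> N" using N_def by simp
    then show "norm (y n - y0) \<le> R" using main[of n] mono[of n] RB by linarith
  qed
qed

end
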